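(* Let $U_0=\{[\xi_0,\ldots,\xi_m]\in\mathbb P^m:\xi_0\neq0\}$, identified with $\mathbb C^m$ via $w_j=\xi_j/\xi_0$. Let $U$ be a simply connected open neighborhood of $[1,0,\ldots,0]$ with $U\subset U_0$ and $\sum_{j=1}^m|\xi_j|^2<|\xi_0|^2$ for all $[\xi_0,\ldots,\xi_m]\in U$ (so $U$ is identified with an open neighborhood of $0$ in $\mathbb B^m$). Then for $1\le p\le m$ the function $$\Upsilon_p(w)=\frac{1}{(1+\|w\|^2)^{2p}}\det\big((1+\|w\|^2)\delta_{st}-\overline{w_s}w_t\big)_{1\le s,t\le p}$$ does not lie in $\Lambda(U)$.
   Context: For a complex manifold $X$, the Umehara algebra $\Lambda(X)$ is the associative algebra of real-analytic functions on $X$ consisting of real linear combinations of functions $f\bar g+g\bar f$ with $f,g$ holomorphic on $X$. *)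

theory Defs
  imports "HOL-Analysis.Analysis"
begin

definition holo_on :: "(complex ^ 'm) set \<Rightarrow> (complex ^ 'm \<Rightarrow> complex) \<Rightarrow> bool" where
  "holo_on U f \<longleftrightarrow>
     (\<forall>z\<in>U. \<exists>f'. (f has_derivative f') (at z) \<and> (\<forall>c v. f' (c *s v) = c * f' v))"

definition umehara :: "(complex ^ 'm) set \<Rightarrow> (complex ^ 'm \<Rightarrow> complex) set" where
  "umehara U = {h. \<exists>(k::nat) (c::nat \<Rightarrow> real) F G.
      (\<forall>i<k. holo_on U (F i) \<and> holo_on U (G i)) \<and>
      (\<forall>z\<in>U. h z = (\<Sum>i<k. complex_of_real (c i) *
                         (F i z * cnj (G i z) + G i z * cnj (F i z))))}"

definition det_nat :: "nat \<Rightarrow> (nat \<Rightarrow> nat \<Rightarrow> complex) \<Rightarrow> complex" where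
  "det_nat p M = (\<Sum>\<sigma> | \<sigma> permutes {1..p}. of_int (sign \<sigma>) * (\<Prod>s=1..p. M s (\<sigma> s)))"

text \<open>Upsilon_p, with coordinates w_j = w $ e j for an enumeration e of the index type.\<close>

definition Upsilon :: "(nat \<Rightarrow> 'm) \<Rightarrow> nat \<Rightarrow> complex ^ 'm \<Rightarrow> complex" where
  "Upsilon e p w =
     complex_of_real (1 / (1 + (norm w)^2) ^ (2*p)) *
     det_nat p (\<lambda>s t. complex_of_real ((1 + (norm w)^2) * (if s = t then 1 else 0))
                       - cnj (w $ e s) * (w $ e t))"

end

theory Submission
  imports Defs "HOL-Complex_Analysis.Complex_Analysis" "Jordan_Normal_Form.Determinant"
begin

lemma aux: fixes y :: complex assumes "y \<noteq> 0"
  shows "inverse (y^Suc k) * (a * y^k * u) * inverse (y^Suc k) = a * u * inverse (y^(Suc (Suc k)))"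
proof -
  have "y^k \<noteq> 0" using assms by simp
  then show ?thesis using assms by (simp add: field_simps power_Suc)
qed

lemma hd_inv:
  fixes u :: complex
  assumes S: "open S" "\<forall>v\<in>S. 1 + u * v \<noteq> 0" and v: "v \<in> S"
  shows "(deriv^^n) (\<lambda>v. inverse((1+u * v)^q)) v
         = (\<Prod>i<n. - of_nat (q+i)) * u^n * inverse((1+u * v)^(q+n))"
  using v
proof (induction n arbitrary: v)
  case 0 then show ?case by simp
next
  case (Suc n v)
  define C where "C = (\<Prod>i<n. - of_nat (q+i)) * (u::complex)^n"
  have ev: "eventually (\<lambda>w. (deriv^^n) (\<lambda>v. inverse((1+u * v)^q)) w = C * inverse((1+u * w)^(q+n))) (nhds v)"
    using eventually_nhds_in_open[OF S(1) Suc.prems] by eventually_elim (simp add: Suc.IH C_def)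
  have nz: "1 + u * v \<noteq> 0" using S Suc.prems by auto
  have d1: "((\<lambda>w. (1+u * w)^(q+n)) has_field_derivative of_nat (q+n) * (1+u * v)^(q+n-1) * u) (at v)"
    by (auto intro!: derivative_eq_intros)
  have d2: "((\<lambda>w. C * inverse((1+u * w)^(q+n))) has_field_derivative
          C * (- (inverse ((1+u * v)^(q+n)) * (of_nat (q+n) * (1+u * v)^(q+n-1) * u) * inverse ((1+u * v)^(q+n))))) (at v)"
    by (intro DERIV_cmult DERIV_inverse' d1) (use nz in simp)
  have eqv: "C * (- (inverse ((1+u * v)^(q+n)) * (of_nat (q+n) * (1+u * v)^(q+n-1) * u) * inverse ((1+u * v)^(q+n))))
      = C * (- of_nat (q+n)) * u * inverse((1+u * v)^(q+Suc n))"
  proof (cases "q+n")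
    case 0 then show ?thesis by simp
  next
    case (Suc k)
    have e1: "q + n - 1 = k" "q + Suc n = Suc (Suc k)" using Suc by simp_all
    show ?thesis unfolding e1 unfolding Suc aux[OF nz] by (simp only: mult_minus_left mult_minus_right mult.assoc)
  qed
  have "((\<lambda>w. C * inverse((1+u * w)^(q+n))) has_field_derivative
          C * (- of_nat (q+n)) * u * inverse((1+u * v)^(q+Suc n))) (at v)"
    using d2 eqv by simp
  then have "deriv (\<lambda>w. C * inverse((1+u * w)^(q+n))) v = C * (- of_nat (q+n)) * u * inverse((1+u * v)^(q+Suc n))"
    by (rule DERIV_imp_deriv)
  moreover have "deriv ((deriv^^n) (\<lambda>v. inverse((1+u * v)^q))) v = deriv (\<lambda>w. C * inverse((1+u * w)^(q+n))) v"
    by (rule deriv_cong_ev[OF ev refl])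
  ultimately show ?case by (simp add: C_def)
qed

lemma higher_deriv_zero: "(deriv^^n) (\<lambda>w::complex. 0::complex) = (\<lambda>w. 0)"
  by (induction n) (auto simp: deriv_const)

lemma higher_deriv_sum:
  fixes f :: "'i \<Rightarrow> complex \<Rightarrow> complex"
  assumes "finite I" "\<forall>i\<in>I. f i holomorphic_on S" "open S" "z\<in>S"
  shows "(deriv^^n) (\<lambda>w. \<Sum>i\<in>I. f i w) z = (\<Sum>i\<in>I. (deriv^^n) (f i) z)"
  using assms(1,2)
proof (induction I rule: finite_induct)
  case empty then show ?case by (simp add: higher_deriv_zero)
next
  case (insert x F)
  have "(deriv^^n) (\<lambda>w. f x w + (\<Sum>i\<in>F. f i w)) z = (deriv^^n) (f x) z + (deriv^^n) (\<lambda>w. \<Sum>i\<in>F. f i w) z"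
    using insert assms(3,4) by (intro higher_deriv_add) (auto intro!: holomorphic_on_sum)
  then show ?case using insert by simp
qed

lemma holo_scale:
  assumes "f holomorphic_on ball 0 r" "norm (c::complex) \<le> 1"
  shows "(\<lambda>z. f (c * z)) holomorphic_on ball 0 r"
proof -
  have "(f \<circ> (\<lambda>z. c * z)) holomorphic_on ball 0 r"
  proof (rule holomorphic_on_compose_gen[OF _ assms(1)])
    show "(*) c holomorphic_on ball 0 r" by (intro holomorphic_intros)
    show "(*) c ` ball 0 r \<subseteq> ball 0 r"
    proof
      fix x assume "x \<in> (*) c ` ball 0 r"
      then obtain z where z: "norm z < r" "x = c * z" by auto
      have "norm x = norm c * norm z" using z by (simp add: norm_mult)
      also have "\<dots> \<le> norm z" using assms(2) by (simp add: mult_left_le_one_le)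
      finally show "x \<in> ball 0 r" using z by simp
    qed
  qed
  then show ?thesis by (simp add: o_def)
qed

lemma cnj_ball: "cnj ` ball (0::complex) r = ball 0 r"
proof -
  have "x \<in> cnj ` ball 0 r" if "x \<in> ball 0 r" for x
    using that by (intro image_eqI[of _ _ "cnj x"]) auto
  then show ?thesis by auto
qed

lemma linalg: fixes N :: nat and \<beta> :: "nat \<Rightarrow> nat \<Rightarrow> complex" shows "\<exists>d. (\<exists>n\<le>N. d n \<noteq> (0::complex)) \<and> (\<forall>j<N. (\<Sum>n\<le>N. d n * \<beta> n j) = 0)"
proof -
  define B :: "complex mat" where "B = Matrix.mat (Suc N) (Suc N) (\<lambda>(j,n). if j < N then \<beta> n j else 0)"
  have Bc: "B \<in> carrier_mat (Suc N) (Suc N)" by (simp add: B_def)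
  have "transpose_mat B *\<^sub>v unit_vec (Suc N) N = 0\<^sub>v (Suc N)"
    by (auto simp: B_def scalar_prod_def unit_vec_def)
  then have "Determinant.det (transpose_mat B) = 0"
    using det_0_iff_vec_prod_zero[of "transpose_mat B" "Suc N"] Bc
    by (metis carrier_matD(1) carrier_matD(2) index_unit_vec(3) transpose_carrier_mat unit_vec_carrier unit_vec_nonzero lessI)
  then have "Determinant.det B = 0" using Bc by (simp add: det_transpose)
  then obtain v where v: "v \<in> carrier_vec (Suc N)" "v \<noteq> 0\<^sub>v (Suc N)" "B *\<^sub>v v = 0\<^sub>v (Suc N)"
    using det_0_iff_vec_prod_zero[OF Bc] by blast
  have nz: "\<exists>n\<le>N. v $ n \<noteq> 0"
  proof (rule ccontr)
    assume "\<not> (\<exists>n\<le>N. v $ n \<noteq> 0)"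
    then have "v = 0\<^sub>v (Suc N)" using v(1) by (intro eq_vecI) auto
    with v(2) show False by simp
  qed
  have zs: "(\<Sum>n\<le>N. v $ n * \<beta> n j) = 0" if j: "j < N" for j
  proof -
    have "(B *\<^sub>v v) $ j = 0" using v(3) j by simp
    then show ?thesis using j v(1)
      by (auto simp: B_def scalar_prod_def mult.commute atLeast0LessThan lessThan_Suc_atMost)
  qed
  show ?thesis using nz zs by (intro exI[of _ "\<lambda>n. v $ n"]) auto
qed

lemma one_plus_ne0:
  fixes x y :: complex
  assumes "norm x < r" "norm y < r" "r \<le> 1"
  shows "1 + x * y \<noteq> 0"
proof
  assume "1 + x * y = 0"
  then have "norm (x * y) = 1" by (metis add_eq_0_iff norm_minus_cancel norm_one)
  moreover have "norm x * norm y < 1 * 1"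
    by (rule mult_strict_mono') (use assms in auto)
  ultimately show False by (simp add: norm_mult)
qed

lemma core:
  fixes a b :: "nat \<Rightarrow> complex \<Rightarrow> complex" and r :: real and q N :: nat
  assumes r: "0 < r" "r \<le> 1" and q: "1 \<le> q"
    and holo: "\<forall>j<N. a j holomorphic_on ball 0 r \<and> b j holomorphic_on ball 0 r"
    and eq: "\<forall>t\<in>ball 0 r. inverse ((1 + t * cnj t)^q) = (\<Sum>j<N. a j t * cnj (b j t))"
  shows False
proof -
  define bs where "bs j = (\<lambda>v. cnj (b j (cnj v)))" for j
  have hb: "bs j holomorphic_on ball 0 r" if "j < N" for j
  proof -
    have "cnj \<circ> b j \<circ> cnj holomorphic_on ball 0 r"
      by (rule holomorphic_on_compose_cnj_cnj) (use holo that in \<open>auto simp: cnj_ball\<close>)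
    then show ?thesis by (simp add: bs_def o_def)
  qed
  have ha: "a j holomorphic_on ball 0 r" if "j < N" for j using holo that by auto
  have S2: "(\<Sum>j<N. a j (l * z) * bs j (cnj l * z)) = inverse((1 + z * z)^q)"
    if l: "norm l = 1" and z: "z \<in> ball 0 r" for l z
  proof -
    define f where "f = (\<lambda>z. (\<Sum>j<N. a j (l * z) * bs j (cnj l * z)) - inverse((1 + z * z)^q))"
    have nz: "1 + z * z \<noteq> 0" if "z \<in> ball 0 r" for z :: complex
      using one_plus_ne0[of z r z] that r by simp
    have hf: "f holomorphic_on ball 0 r"
      unfolding f_def
      by (intro holomorphic_intros holomorphic_on_sum ballI holo_scale ha hb)
         (use l nz in auto)
    have "f z = 0"
    proof (rule analytic_continuation[OF hf open_ball connected_ball, of "{z \<in> ball 0 r. Im z = 0}" 0])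
      show "{z \<in> ball 0 r. Im z = 0} \<subseteq> ball 0 r" by auto
      show "0 \<in> ball (0::complex) r" using r by simp
      show "z \<in> ball 0 r" by fact
      show "0 islimpt {z \<in> ball 0 r. Im z = 0}"
      proof (rule islimpt_approachable[THEN iffD2], intro allI impI)
        fix e :: real assume e: "0 < e"
        define x where "x = complex_of_real (min e r / 2)"
        have "x \<in> {z \<in> ball 0 r. Im z = 0}" "x \<noteq> 0" "dist x 0 < e"
          using e r by (auto simp: x_def)
        then show "\<exists>x'\<in>{z \<in> ball 0 r. Im z = 0}. x' \<noteq> 0 \<and> dist x' 0 < e" by blast
      qed
      fix w assume w: "w \<in> {z \<in> ball 0 r. Im z = 0}"
      define x where "x = Re w"
      have x: "w = complex_of_real x" using w by (simp add: x_def complex_eq_iff)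
      have lw: "l * w \<in> ball 0 r" using w l by (simp add: norm_mult)
      have "bs j (cnj l * w) = cnj (b j (l * w))" for j
        by (simp add: bs_def x)
      then have "(\<Sum>j<N. a j (l * w) * bs j (cnj l * w)) = inverse ((1 + (l * w) * cnj (l * w))^q)"
        using eq lw by (simp del: complex_cnj_mult)
      also have "(l * w) * cnj (l * w) = w * w"
      proof -
        have "l * cnj l = complex_of_real ((norm l)^2)" by (rule complex_norm_square[symmetric])
        then have l1: "l * cnj l = 1" using l by simp
        have "(l * w) * cnj (l * w) = (l * cnj l) * (w * cnj w)" by (simp add: algebra_simps)
        then show ?thesis using l1 by (simp add: x)
      qed
      finally show "f w = 0" by (simp add: f_def)
    qed
    then show ?thesis by (simp add: f_def)
  qed
  have S3: "(\<Sum>j<N. a j u * bs j v) = inverse((1 + u * v)^q)"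
    if uv: "norm u = norm v" "norm u < r" for u v
  proof (cases "u * v = 0")
    case True
    then have "u = 0" "v = 0" using uv by auto
    then show ?thesis using S2[of 1 0] r by simp
  next
    case False
    define z where "z = csqrt (u * v)"
    have zz: "z * z = u * v" unfolding z_def by (metis power2_csqrt power2_eq_square)
    have z0: "z \<noteq> 0" using False zz by auto
    have nzu: "norm z = norm u"
    proof -
      have "norm z = sqrt (norm u * norm u)" by (simp add: z_def norm_mult uv)
      then show ?thesis by simp
    qed
    define l where "l = u / z"
    have l1: "norm l = 1" using nzu z0 False by (simp add: l_def norm_divide)
    have lz: "l * z = u" using z0 by (simp add: l_def)
    have clz: "cnj l * z = v"
    proof -
      have "cnj l * z = cnj u * (z * z) / (cnj z * z)" using z0 by (simp add: l_def field_simps)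
      also have "cnj z * z = cnj u * u"
        using nzu by (metis complex_norm_square mult.commute)
      also have "cnj u * (z * z) / (cnj u * u) = v" using zz False by (simp add: field_simps)
      finally show ?thesis .
    qed
    have "z \<in> ball 0 r" using nzu uv by simp
    from S2[OF l1 this] show ?thesis unfolding lz clz zz .
  qed
  have S4: "(\<Sum>j<N. a j u * bs j v) = inverse((1 + u * v)^q)"
    if u: "0 < norm u" "norm u < r" and v: "v \<in> ball 0 r" for u v
  proof -
    define f where "f = (\<lambda>v. (\<Sum>j<N. a j u * bs j v) - inverse((1 + u * v)^q))"
    have nz: "1 + u * v \<noteq> 0" if "v \<in> ball 0 r" for v :: complex
      using one_plus_ne0[of u r v] that r u by simp
    have hf: "f holomorphic_on ball 0 r"
      unfolding f_def
      by (intro holomorphic_intros holomorphic_on_sum ballI hb) (use nz in auto)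
    have "f v = 0"
    proof (rule analytic_continuation[OF hf open_ball connected_ball, of "sphere 0 (norm u)" u])
      show "sphere 0 (norm u) \<subseteq> ball 0 r" using u by auto
      show "u \<in> ball 0 r" using u by simp
      show "v \<in> ball 0 r" by fact
      show "u islimpt sphere 0 (norm u)"
      proof (rule connected_imp_perfect)
        show "connected (sphere (0::complex) (norm u))" by (rule connected_sphere) simp
        show "u \<in> sphere 0 (norm u)" by simp
        fix x :: complex show "sphere 0 (norm u) \<noteq> {x}"
        proof
          assume A: "sphere 0 (norm u) = {x}"
          have "u \<in> {x}" "-u \<in> {x}" unfolding A[symmetric] by auto
          then have "u = -u" by simp
          then show False using u by (simp add: minus_equation_iff)
        qed
      qed
      fix w :: complex assume "w \<in> sphere 0 (norm u)"
      then show "f w = 0" using S3[of u w] u by (simp add: f_def)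
    qed
    then show ?thesis by (simp add: f_def)
  qed
  define c where "c n = (\<Prod>i<n. - of_nat (q+i) :: complex)" for n
  have cf: "- of_nat (q+i) \<noteq> (0::complex)" for i
    using q by (simp only: neg_equal_0_iff_equal of_nat_eq_0_iff)
  have c0: "c n \<noteq> 0" for n
    unfolding c_def prod_zero_iff[OF finite_lessThan] using cf by blast
  define \<beta> where "\<beta> n j = (deriv^^n) (bs j) 0" for n j
  have S5: "(\<Sum>j<N. a j u * \<beta> n j) = c n * u^n"
    if u: "0 < norm u" "norm u < r" for u n
  proof -
    have nz: "\<forall>v\<in>ball 0 r. 1 + u * v \<noteq> 0"
    proof
      fix v :: complex assume "v \<in> ball 0 r"
      show "1 + u * v \<noteq> 0"
        using one_plus_ne0[of u r v] \<open>v \<in> ball 0 r\<close> r u by simp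
    qed
    have 0: "(0::complex) \<in> ball 0 r" using r by simp
    have "(deriv^^n) (\<lambda>v. \<Sum>j<N. a j u * bs j v) 0 = (deriv^^n) (\<lambda>v. inverse((1 + u * v)^q)) 0"
      by (rule higher_deriv_transform_within_open[OF _ _ open_ball 0])
         (use nz hb in \<open>auto intro!: holomorphic_intros holomorphic_on_sum S4 u\<close>)
    also have "\<dots> = c n * u^n"
      using hd_inv[OF open_ball nz 0, of n q] by (simp add: c_def)
    also have "(deriv^^n) (\<lambda>v. \<Sum>j<N. a j u * bs j v) 0 = (\<Sum>j<N. (deriv^^n) (\<lambda>v. a j u * bs j v) 0)"
      by (rule higher_deriv_sum[OF _ _ open_ball 0]) (auto intro!: holomorphic_intros hb)
    also have "\<dots> = (\<Sum>j<N. a j u * \<beta> n j)"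
      by (intro sum.cong refl) (simp add: \<beta>_def higher_deriv_cmult[OF hb 0 open_ball])
    finally show ?thesis .
  qed
  obtain d where d: "\<exists>n\<le>N. d n \<noteq> 0" "\<forall>j<N. (\<Sum>n\<le>N. d n * \<beta> n j) = 0"
    using linalg[of N \<beta>] by blast
  have P0: "(\<Sum>n\<le>N. (d n * c n) * u^n) = 0" if u: "0 < norm u" "norm u < r" for u
  proof -
    have "(\<Sum>n\<le>N. (d n * c n) * u^n) = (\<Sum>n\<le>N. d n * (\<Sum>j<N. a j u * \<beta> n j))"
      using S5[OF u] by (simp add: mult.assoc)
    also have "\<dots> = (\<Sum>j<N. a j u * (\<Sum>n\<le>N. d n * \<beta> n j))"
      by (simp add: sum_distrib_left sum.swap[of _ "{..N}"] mult.assoc mult.left_commute)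
    also have "\<dots> = 0" using d(2) by simp
    finally show ?thesis .
  qed
  have "infinite {u::complex. 0 < norm u \<and> norm u < r}"
  proof
    assume fin: "finite {u::complex. 0 < norm u \<and> norm u < r}"
    have "complex_of_real ` {0<..<r} \<subseteq> {u::complex. 0 < norm u \<and> norm u < r}" by auto
    then have "finite (complex_of_real ` {0<..<r})" using fin finite_subset by blast
    then have "finite {0<..<r}" by (rule finite_imageD) (simp add: inj_on_def)
    then show False using r infinite_Ioo[of 0 r] by simp
  qed
  then have "infinite {u. (\<Sum>n\<le>N. (d n * c n) * u^n) = 0}"
    by (rule infinite_super[rotated]) (auto intro: P0)
  then have "\<forall>n\<le>N. d n * c n = 0" using polyfun_finite_roots[of "\<lambda>n. d n * c n" N] by blast
  then show False using d(1) c0 by auto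
qed

lemma sum_pairs: "(\<Sum>j<2*(k::nat). f j) = (\<Sum>i<k. f (2*i) + f (2*i+1))"
  by (induction k) (simp_all add: algebra_simps)

lemma norm_axis_eq: "norm (axis i (t::complex) :: complex ^ 'm::finite) = norm t"
  by (simp add: norm_eq_sqrt_inner inner_axis_axis)

lemma bounded_linear_axis: "bounded_linear (axis i :: complex \<Rightarrow> complex ^ 'm::finite)"
proof -
  have "linear (axis i :: complex \<Rightarrow> complex ^ 'm)"
    by (rule linearI) (simp_all add: axis_def Finite_Cartesian_Product.vec_eq_iff)
  then show ?thesis by (simp add: linear_conv_bounded_linear)
qed

lemma holo_emb:
  fixes F :: "complex ^ 'm::finite \<Rightarrow> complex"
  assumes h: "holo_on U F" and B: "open B" "\<forall>t\<in>B. axis i t \<in> U"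
  shows "(\<lambda>t. F (axis i t)) holomorphic_on B"
proof -
  have "\<exists>D. ((\<lambda>t. F (axis i t)) has_field_derivative D) (at x)" if x: "x \<in> B" for x
  proof -
    obtain F' where F': "(F has_derivative F') (at (axis i x))" "\<forall>c v. F' (c *s v) = c * F' v"
      using h B x unfolding holo_on_def by blast
    have "((\<lambda>t. F (axis i t)) has_derivative (\<lambda>h. F' (axis i h))) (at x)"
      by (rule has_derivative_compose[OF bounded_linear_imp_has_derivative[OF bounded_linear_axis] F'(1)])
    moreover have "(\<lambda>h. F' (axis i h)) = (*) (F' (axis i 1))"
    proof
      fix h :: complex
      have "axis i h = h *s (axis i 1 :: complex ^ 'm)" by (simp add: axis_def Finite_Cartesian_Product.vec_eq_iff)
      then show "F' (axis i h) = F' (axis i 1) * h" using F'(2) by (simp add: mult.commute)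
    qed
    ultimately show ?thesis unfolding has_field_derivative_def by auto
  qed
  then show ?thesis using B(1) by (simp add: holomorphic_on_open)
qed

lemma det_diag:
  assumes "\<forall>s\<in>{1..p}. \<forall>t\<in>{1..p}. s \<noteq> t \<longrightarrow> M s t = 0"
  shows "det_nat p M = (\<Prod>s=1..p. M s s)"
proof -
  let ?P = "{\<sigma>. \<sigma> permutes {1..p}}"
  have fin: "finite ?P" by (rule finite_permutations) simp
  have id: "id \<in> ?P" by (simp add: permutes_id)
  have z: "of_int (sign \<sigma>) * (\<Prod>s=1..p. M s (\<sigma> s)) = 0" if "\<sigma> \<in> ?P - {id}" for \<sigma>
  proof -
    have sp: "\<sigma> permutes {1..p}" "\<sigma> \<noteq> id" using that by auto
    obtain s where s: "\<sigma> s \<noteq> s"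
      using sp(2) by (metis eq_id_iff)
    have "s \<in> {1..p}" using s sp(1) by (meson permutes_not_in)
    moreover have "\<sigma> s \<in> {1..p}" using calculation by (rule permutes_in_image[OF sp(1), THEN iffD2])
    ultimately have "M s (\<sigma> s) = 0" using assms s by auto
    then have "(\<Prod>s=1..p. M s (\<sigma> s)) = 0" using \<open>s \<in> {1..p}\<close> by (intro prod_zero) auto
    then show ?thesis by simp
  qed
  have "det_nat p M = of_int (sign (id::nat\<Rightarrow>nat)) * (\<Prod>s=1..p. M s (id s))
     + (\<Sum>\<sigma>\<in>?P - {id}. of_int (sign \<sigma>) * (\<Prod>s=1..p. M s (\<sigma> s)))"
    unfolding det_nat_def by (rule sum.remove[OF fin id])
  also have "(\<Sum>\<sigma>\<in>?P - {id}. of_int (sign \<sigma>) * (\<Prod>s=1..p. M s (\<sigma> s))) = 0"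
    using z by (intro sum.neutral) blast
  finally show ?thesis by (simp add: sign_id)
qed

lemma upsilon_axis:
  fixes e :: "nat \<Rightarrow> 'm::finite" and t :: complex
  assumes e: "bij_betw e {1..CARD('m)} UNIV" and p: "1 \<le> p" "p \<le> CARD('m)"
  shows "Upsilon e p (axis (e 1) t :: complex ^ 'm) = inverse ((1 + t * cnj t)^(p+1))"
proof -
  define w where "w = (axis (e 1) t :: complex ^ 'm)"
  define R where "R = 1 + (norm t)^2"
  have R0: "R > 0" by (simp add: R_def add_pos_nonneg)
  have nw: "norm w = norm t" by (simp add: w_def norm_axis_eq)
  have inj: "inj_on e {1..CARD('m)}" using e by (simp add: bij_betw_def)
  have we: "w $ e s = (if s = 1 then t else 0)" if "s \<in> {1..p}" for s
  proof -
    have "e s = e 1 \<longleftrightarrow> s = 1" using inj that p by (auto dest: inj_onD)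
    then show ?thesis by (simp add: w_def axis_def)
  qed
  define M where "M = (\<lambda>s t'. complex_of_real ((1 + (norm w)^2) * (if s = t' then 1 else 0))
                       - cnj (w $ e s) * (w $ e t'))"
  have tc0: "t * cnj t = complex_of_real ((norm t)^2)" by (rule complex_norm_square[symmetric])
  have tc: "1 + t * cnj t = complex_of_real R" unfolding tc0 R_def by simp
  have Mdiag: "\<forall>s\<in>{1..p}. \<forall>t'\<in>{1..p}. s \<noteq> t' \<longrightarrow> M s t' = 0"
    using we by (auto simp: M_def)
  have M1: "M 1 1 = 1" using we[of 1] p nw by (simp add: M_def tc0 mult.commute)
  have Ms: "M s s = complex_of_real R" if "s \<in> {2..p}" for s
    using we[of s] that nw by (simp add: M_def R_def)
  have "det_nat p M = (\<Prod>s=1..p. M s s)" by (rule det_diag[OF Mdiag])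
  also have "\<dots> = M 1 1 * (\<Prod>s=Suc 1..p. M s s)" using p by (simp add: prod.atLeast_Suc_atMost)
  also have "(\<Prod>s=Suc 1..p. M s s) = (\<Prod>s=2..p. complex_of_real R)" using Ms by (intro prod.cong) auto
  also have "\<dots> = complex_of_real R ^ (p - 1)" by simp
  finally have det: "det_nat p M = complex_of_real (R ^ (p - 1))" using M1 by simp
  have "Upsilon e p w = complex_of_real (1 / (1 + (norm w)^2) ^ (2*p)) * det_nat p M"
    unfolding Upsilon_def M_def by (rule refl)
  also have "\<dots> = complex_of_real (1 / R ^ (2*p)) * complex_of_real (R ^ (p - 1))"
    by (simp only: det nw R_def)
  also have "\<dots> = complex_of_real (1 / R ^ (p+1))"
  proof -
    have "2*p = (p - 1) + (p+1)" using p by simp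
    then have "R ^ (2*p) = R ^ (p - 1) * R ^ (p+1)" by (metis power_add)
    then show ?thesis using R0 by (simp add: field_simps)
  qed
  also have "\<dots> = inverse ((1 + t * cnj t)^(p+1))"
    by (simp add: tc R_def divide_inverse del: of_real_power) (simp add: of_real_inverse[symmetric])
  finally show ?thesis by (simp add: w_def)
qed

theorem lemma3p6:
  fixes U :: "(complex ^ 'm) set" and e :: "nat \<Rightarrow> 'm" and p :: nat
  assumes "bij_betw e {1..CARD('m)} UNIV"
    and "open U" and "simply_connected U" and "0 \<in> U"
    and "\<forall>w\<in>U. norm w < 1"
    and "1 \<le> p" and "p \<le> CARD('m)"
  shows "Upsilon e p \<notin> umehara U"
proof
  assume "Upsilon e p \<in> umehara U"
  then obtain k :: nat and c F G where hFG: "\<forall>i<k. holo_on U (F i) \<and> holo_on U (G i)"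
    and eqU: "\<forall>z\<in>U. Upsilon e p z = (\<Sum>i<k. complex_of_real (c i) *
                         (F i z * cnj (G i z) + G i z * cnj (F i z)))"
    unfolding umehara_def mem_Collect_eq by blast
  obtain \<epsilon> where \<epsilon>: "\<epsilon> > 0" "ball 0 \<epsilon> \<subseteq> U" using assms(2,4) open_contains_ball by blast
  define r where "r = min \<epsilon> 1"
  have r: "0 < r" "r \<le> 1" using \<epsilon> by (auto simp: r_def)
  define i0 where "i0 = e 1"
  have inU: "\<forall>t\<in>ball 0 r. axis i0 t \<in> U"
    using \<epsilon> by (auto simp: r_def norm_axis_eq)
  define a where "a j = (if even j then (\<lambda>t. complex_of_real (c (j div 2)) * F (j div 2) (axis i0 t))
                        else (\<lambda>t. complex_of_real (c (j div 2)) * G (j div 2) (axis i0 t)))" for j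
  define b where "b j = (if even j then (\<lambda>t. G (j div 2) (axis i0 t)) else (\<lambda>t. F (j div 2) (axis i0 t)))" for j
  have hF: "(\<lambda>t. F i (axis i0 t)) holomorphic_on ball 0 r" "(\<lambda>t. G i (axis i0 t)) holomorphic_on ball 0 r"
    if "i < k" for i
    using hFG that inU by (auto intro!: holo_emb)
  have holo: "\<forall>j<2*k. a j holomorphic_on ball 0 r \<and> b j holomorphic_on ball 0 r"
  proof (intro allI impI)
    fix j assume "j < 2*k"
    then have "j div 2 < k" by simp
    then show "a j holomorphic_on ball 0 r \<and> b j holomorphic_on ball 0 r"
      using hF[of "j div 2"] by (auto simp: a_def b_def intro!: holomorphic_intros)
  qed
  have eq: "\<forall>t\<in>ball 0 r. inverse ((1 + t * cnj t)^(p+1)) = (\<Sum>j<2*k. a j t * cnj (b j t))"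
  proof
    fix t :: complex assume t: "t \<in> ball 0 r"
    have "inverse ((1 + t * cnj t)^(p+1)) = Upsilon e p (axis i0 t)"
      using upsilon_axis[OF assms(1) assms(6,7)] by (simp add: i0_def)
    also have "\<dots> = (\<Sum>i<k. complex_of_real (c i) *
                         (F i (axis i0 t) * cnj (G i (axis i0 t)) + G i (axis i0 t) * cnj (F i (axis i0 t))))"
      using eqU inU t by blast
    also have "\<dots> = (\<Sum>j<2*k. a j t * cnj (b j t))"
      unfolding sum_pairs by (intro sum.cong refl) (simp add: a_def b_def algebra_simps)
    finally show "inverse ((1 + t * cnj t)^(p+1)) = (\<Sum>j<2*k. a j t * cnj (b j t))" .
  qed
  show False by (rule core[OF r _ holo eq]) simp
qed

end
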